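(* Let $1\le k\le n-1$, let $I,J\in V_{k,n}$, and let $P_1,\dots,P_d$ be the connected components of $F_I\triangle F_J$, ordered by increasing column index. Let $\alpha_I,\alpha_J\in\{0,1\}^d$ be defined by $(\alpha_I)_m=1$ iff $P_m\subseteq F_I$ (and similarly for $J$), so that $\chi_I=\chi_{F_I\cap F_J}+\sum_m(\alpha_I)_m\chi_{P_m}$ and likewise for $J$. Then: (1) $I$ and $J$ are nonnesting if and only if $\{\alpha_I,\alpha_J\}=\{(0,\dots,0),(1,\dots,1)\}$; (2) $I$ and $J$ are noncrossing if and only if $\{\alpha_I,\alpha_J\}=\{(0,1,0,1,\dots),(1,0,1,0,\dots)\}$ (the two alternating vectors of length $d$).
   Context: $V_{k,n}$ denotes the set of integer vectors $I=(i_1,\dots,i_k)$ with $1\le i_1<\dots<i_k\le n$. Two arcs $(p<p')$, $(q<q')$ cross if $p<q<p'<q'$ or $q<p<q'<p'$; they nest if $p<q<q'<p'$ or $q<p<p'<q'$. $I,J$ are noncrossing if for all $1\le a<b\le k$ with $i_\ell=j_\ell$ for all $a<\ell<b$, the arcs $(i_a<i_b)$ and $(j_a<j_b)$ do not cross; they are nonnesting if for all $1\le a<b\le k$ these arcs do not nest. Let $P_{k,n}=\{(a,b):a\in[k],b\in[n-k]\}$ ($a$ = row, $b$ = column index), and for $I\in V_{k,n}$ let $F_I=\{(a,b)\in P_{k,n}: i_a\le a+b-1\}$ with characteristic vector $\chi_I$. The connected components of $S=F_I\triangle F_J$ are taken with respect to adjacency of positions differing by $1$ in exactly one coordinate; they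 occupy pairwise disjoint intervals of column indices, and are labeled $P_1,\dots,P_d$ from left (smallest column indices) to right. *)

theory Defs
  imports Main
begin

text \<open>Vectors I = (i_1,...,i_k) are functions on the index set {1..k}.\<close>

definition inV :: "nat \<Rightarrow> nat \<Rightarrow> (nat \<Rightarrow> nat) \<Rightarrow> bool" where
  "inV k n I \<longleftrightarrow> strict_mono_on {1..k} I \<and> I ` {1..k} \<subseteq> {1..n}"

definition arcs_cross :: "nat \<Rightarrow> nat \<Rightarrow> nat \<Rightarrow> nat \<Rightarrow> bool" where
  "arcs_cross p p' q q' \<longleftrightarrow> (p < q \<and> q < p' \<and> p' < q') \<or> (q < p \<and> p < q' \<and> q' < p')"

definition arcs_nest :: "nat \<Rightarrow> nat \<Rightarrow> nat \<Rightarrow> nat \<Rightarrow> bool" where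
  "arcs_nest p p' q q' \<longleftrightarrow> (p < q \<and> q < q' \<and> q' < p') \<or> (q < p \<and> p < p' \<and> p' < q')"

definition noncrossing :: "nat \<Rightarrow> (nat \<Rightarrow> nat) \<Rightarrow> (nat \<Rightarrow> nat) \<Rightarrow> bool" where
  "noncrossing k I J \<longleftrightarrow>
     (\<forall>a b. 1 \<le> a \<longrightarrow> a < b \<longrightarrow> b \<le> k \<longrightarrow> (\<forall>l. a < l \<longrightarrow> l < b \<longrightarrow> I l = J l) \<longrightarrow>
        \<not> arcs_cross (I a) (I b) (J a) (J b))"

definition nonnesting :: "nat \<Rightarrow> (nat \<Rightarrow> nat) \<Rightarrow> (nat \<Rightarrow> nat) \<Rightarrow> bool" where
  "nonnesting k I J \<longleftrightarrow>
     (\<forall>a b. 1 \<le> a \<longrightarrow> a < b \<longrightarrow> b \<le> k \<longrightarrow> \<not> arcs_nest (I a) (I b) (J a) (J b))"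

text \<open>P_{k,n}: positions (a,b), a = row in [k], b = column in [n-k].\<close>
definition Pkn :: "nat \<Rightarrow> nat \<Rightarrow> (nat \<times> nat) set" where
  "Pkn k n = {1..k} \<times> {1..n - k}"

definition F :: "nat \<Rightarrow> nat \<Rightarrow> (nat \<Rightarrow> nat) \<Rightarrow> (nat \<times> nat) set" where
  "F k n I = {(a, b) \<in> Pkn k n. I a \<le> a + b - 1}"

definition adjacent :: "nat \<times> nat \<Rightarrow> nat \<times> nat \<Rightarrow> bool" where
  "adjacent x y \<longleftrightarrow>
     (fst x = fst y \<and> (snd x = snd y + 1 \<or> snd y = snd x + 1)) \<or>
     (snd x = snd y \<and> (fst x = fst y + 1 \<or> fst y = fst x + 1))"

definition component :: "(nat \<times> nat) set \<Rightarrow> nat \<times> nat \<Rightarrow> (nat \<times> nat) set" where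
  "component S x = {y \<in> S. (\<lambda>u v. u \<in> S \<and> v \<in> S \<and> adjacent u v)\<^sup>*\<^sup>* x y}"

definition components :: "(nat \<times> nat) set \<Rightarrow> (nat \<times> nat) set set" where
  "components S = component S ` S"

definition comp_list :: "nat \<Rightarrow> nat \<Rightarrow> (nat \<Rightarrow> nat) \<Rightarrow> (nat \<Rightarrow> nat) \<Rightarrow> (nat \<times> nat) set list" where
  "comp_list k n I J =
     sorted_key_list_of_set (\<lambda>P. Min (snd ` P)) (components (F k n I - F k n J \<union> (F k n J - F k n I)))"

definition alpha :: "nat \<Rightarrow> nat \<Rightarrow> (nat \<Rightarrow> nat) \<Rightarrow> (nat \<Rightarrow> nat) \<Rightarrow> (nat \<Rightarrow> nat) \<Rightarrow> nat list" where
  "alpha k n X I J = map (\<lambda>P. if P \<subseteq> F k n X then 1 else 0) (comp_list k n I J)"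

definition alt01 :: "nat \<Rightarrow> nat list" where
  "alt01 d = map (\<lambda>i. i mod 2) [0..<d]"

definition alt10 :: "nat \<Rightarrow> nat list" where
  "alt10 d = map (\<lambda>i. 1 - i mod 2) [0..<d]"

end

theory Submission
  imports Defs
begin
lemma smono_gap:
  fixes X :: "nat \<Rightarrow> nat" and a a' k :: nat
  assumes "strict_mono_on {1..k} X" "1 \<le> a" "a \<le> a'" "a' \<le> k"
  shows "X a + (a' - a) \<le> X a'"
  using assms(3,4)
proof (induction a' rule: dec_induct)
  case base then show ?case by simp
next
  case (step m)
  have "X m < X (Suc m)"
    using assms(1,2) step by (intro strict_mono_onD[OF assms(1)]) auto
  with step show ?case by simp
qed

lemma inV_bounds:
  assumes "inV k n X" "1 \<le> a" "a \<le> k"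
  shows "a \<le> X a \<and> X a + k \<le> n + a"
proof -
  have sm: "strict_mono_on {1..k} X" and im: "X ` {1..k} \<subseteq> {1..n}" using assms(1) by (auto simp: inV_def)
  have "X 1 + (a - 1) \<le> X a" using smono_gap[OF sm, of 1 a] assms by auto
  moreover have "X 1 \<ge> 1" using im assms by (force simp: image_subset_iff)
  moreover have "X a + (k - a) \<le> X k" using smono_gap[OF sm, of a k] assms by auto
  moreover have "X k \<le> n" using im assms by (force simp: image_subset_iff)
  ultimately show ?thesis using assms by linarith
qed
lemma smono_less:
  fixes X :: "nat \<Rightarrow> nat"
  assumes "inV k n X" "1 \<le> a" "a < b" "b \<le> k"
  shows "X a < X b"
  using assms by (auto simp: inV_def intro: strict_mono_onD)

lemma map_rep_iff: "map f L = replicate (length L) c \<longleftrightarrow> (\<forall>z\<in>set L. f z = c)"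
  by (induction L) auto

lemma G_const:
  fixes p :: "'a \<Rightarrow> bool"
  shows "{map (\<lambda>z. if p z then 1 else 0) L, map (\<lambda>z. if p z then 0 else 1) L}
           = {replicate (length L) (0::nat), replicate (length L) 1}
         \<longleftrightarrow> (\<forall>z\<in>set L. \<forall>w\<in>set L. p z = p w)"
proof -
  have e1: "map (\<lambda>z. if p z then 1 else 0) L = replicate (length L) (0::nat) \<longleftrightarrow> (\<forall>z\<in>set L. \<not> p z)"
    by (simp add: map_rep_iff)
  have e2: "map (\<lambda>z. if p z then 1 else 0) L = replicate (length L) (1::nat) \<longleftrightarrow> (\<forall>z\<in>set L. p z)"
    by (simp add: map_rep_iff)
  have e3: "map (\<lambda>z. if p z then 0 else 1) L = replicate (length L) (0::nat) \<longleftrightarrow> (\<forall>z\<in>set L. p z)"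
    by (simp add: map_rep_iff)
  have e4: "map (\<lambda>z. if p z then 0 else 1) L = replicate (length L) (1::nat) \<longleftrightarrow> (\<forall>z\<in>set L. \<not> p z)"
    by (simp add: map_rep_iff)
  show ?thesis unfolding doubleton_eq_iff e1 e2 e3 e4 by blast
qed

lemma alt_len[simp]: "length (alt01 d) = d" "length (alt10 d) = d" unfolding alt01_def alt10_def by simp_all
lemma alt01_nth: "i < d \<Longrightarrow> alt01 d ! i = i mod 2" unfolding alt01_def by simp
lemma alt10_nth: "i < d \<Longrightarrow> alt10 d ! i = 1 - i mod 2" unfolding alt10_def by simp

lemma G_alt:
  fixes p :: "'a \<Rightarrow> bool"
  shows "{map (\<lambda>z. if p z then 1 else 0) L, map (\<lambda>z. if p z then 0 else 1) L}
           = {alt01 (length L), alt10 (length L)}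
         \<longleftrightarrow> (\<forall>i. Suc i < length L \<longrightarrow> p (L ! i) \<noteq> p (L ! Suc i))"
proof -
  let ?d = "length L"
  have e1: "map (\<lambda>z. if p z then 1 else 0) L = alt01 ?d \<longleftrightarrow> (\<forall>i<?d. p (L ! i) \<longleftrightarrow> odd i)"
    by (auto simp: list_eq_iff_nth_eq alt01_nth mod2_eq_if)
  have e2: "map (\<lambda>z. if p z then 1 else 0) L = alt10 ?d \<longleftrightarrow> (\<forall>i<?d. p (L ! i) \<longleftrightarrow> even i)"
    by (auto simp: list_eq_iff_nth_eq alt10_nth mod2_eq_if)
  have e3: "map (\<lambda>z. if p z then 0 else 1) L = alt01 ?d \<longleftrightarrow> (\<forall>i<?d. p (L ! i) \<longleftrightarrow> even i)"
    by (auto simp: list_eq_iff_nth_eq alt01_nth mod2_eq_if)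
  have e4: "map (\<lambda>z. if p z then 0 else 1) L = alt10 ?d \<longleftrightarrow> (\<forall>i<?d. p (L ! i) \<longleftrightarrow> odd i)"
    by (auto simp: list_eq_iff_nth_eq alt10_nth mod2_eq_if)
  have lhs: "{map (\<lambda>z. if p z then 1 else 0) L, map (\<lambda>z. if p z then 0 else 1) L}
           = {alt01 ?d, alt10 ?d} \<longleftrightarrow> (\<forall>i<?d. p (L ! i) \<longleftrightarrow> odd i) \<or> (\<forall>i<?d. p (L ! i) \<longleftrightarrow> even i)"
    unfolding doubleton_eq_iff e1 e2 e3 e4 by blast
  have rhs: "(\<forall>i. Suc i < ?d \<longrightarrow> p (L ! i) \<noteq> p (L ! Suc i)) \<longleftrightarrow>
      (\<forall>i<?d. p (L ! i) \<longleftrightarrow> odd i) \<or> (\<forall>i<?d. p (L ! i) \<longleftrightarrow> even i)"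
  proof
    assume H: "\<forall>i. Suc i < ?d \<longrightarrow> p (L ! i) \<noteq> p (L ! Suc i)"
    have G: "\<forall>i<?d. p (L ! i) \<longleftrightarrow> (p (L ! 0) \<longleftrightarrow> even i)"
    proof (intro allI impI)
      fix i assume "i < ?d"
      then show "p (L ! i) \<longleftrightarrow> (p (L ! 0) \<longleftrightarrow> even i)"
      proof (induction i)
        case 0 then show ?case by simp
      next
        case (Suc i)
        have a: "p (L ! i) \<longleftrightarrow> (p (L ! 0) \<longleftrightarrow> even i)" using Suc by simp
        have b: "p (L ! i) \<noteq> p (L ! Suc i)" using H Suc(2) by blast
        show ?case using a b by (cases "even i") auto
      qed
    qed
    show "(\<forall>i<?d. p (L ! i) \<longleftrightarrow> odd i) \<or> (\<forall>i<?d. p (L ! i) \<longleftrightarrow> even i)"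
    proof (cases "p (L ! 0)")
      case True then show ?thesis using G by simp
    next
      case False then show ?thesis using G by simp
    qed
  next
    assume A: "(\<forall>i<?d. p (L ! i) \<longleftrightarrow> odd i) \<or> (\<forall>i<?d. p (L ! i) \<longleftrightarrow> even i)"
    show "\<forall>i. Suc i < ?d \<longrightarrow> p (L ! i) \<noteq> p (L ! Suc i)"
    proof (intro allI impI)
      fix i assume i: "Suc i < ?d"
      then have i': "i < ?d" by simp
      from A show "p (L ! i) \<noteq> p (L ! Suc i)"
      proof
        assume B: "\<forall>i<?d. p (L ! i) \<longleftrightarrow> odd i"
        have "p (L ! i) \<longleftrightarrow> odd i" "p (L ! Suc i) \<longleftrightarrow> odd (Suc i)" using B i i' by blast+
        then show ?thesis by simp
      next
        assume B: "\<forall>i<?d. p (L ! i) \<longleftrightarrow> even i"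
        have "p (L ! i) \<longleftrightarrow> even i" "p (L ! Suc i) \<longleftrightarrow> even (Suc i)" using B i i' by blast+
        then show ?thesis by simp
      qed
    qed
  qed
  show ?thesis using lhs rhs by simp
qed

lemma sorted_idx:
  fixes key :: "'a \<Rightarrow> nat"
  assumes "sorted_wrt (<) (map key L)" "i < length L" "j < length L"
  shows "key (L ! i) < key (L ! j) \<longleftrightarrow> i < j"
proof -
  have lt: "key (L ! i') < key (L ! j')" if "i' < j'" "j' < length L" for i' j'
    using sorted_wrt_nth_less[OF assms(1), of i' j'] that by simp
  show ?thesis using lt[of i j] lt[of j i] assms(2,3) by (cases "i < j"; cases "j < i") auto
qed

lemma G_cons:
  fixes key :: "'a \<Rightarrow> nat"
  assumes srt: "sorted_wrt (<) (map key L)"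
  shows "(\<forall>i. Suc i < length L \<longrightarrow> Q (L ! i) (L ! Suc i)) \<longleftrightarrow>
    (\<forall>P\<in>set L. \<forall>P'\<in>set L. key P < key P' \<and> \<not> (\<exists>X\<in>set L. key P < key X \<and> key X < key P') \<longrightarrow> Q P P')"
proof
  assume H: "\<forall>i. Suc i < length L \<longrightarrow> Q (L ! i) (L ! Suc i)"
  show "\<forall>P\<in>set L. \<forall>P'\<in>set L. key P < key P' \<and> \<not> (\<exists>X\<in>set L. key P < key X \<and> key X < key P') \<longrightarrow> Q P P'"
  proof (intro ballI impI)
    fix P P' assume P: "P \<in> set L" "P' \<in> set L"
      and c: "key P < key P' \<and> \<not> (\<exists>X\<in>set L. key P < key X \<and> key X < key P')"
    obtain i j where ij: "i < length L" "j < length L" "P = L ! i" "P' = L ! j"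
      using P by (auto simp: in_set_conv_nth)
    have "i < j" using sorted_idx[OF srt ij(1,2)] c ij by simp
    have "j = Suc i"
    proof (rule ccontr)
      assume "j \<noteq> Suc i"
      then have "Suc i < j" using \<open>i < j\<close> by simp
      then have "key P < key (L ! Suc i)" "key (L ! Suc i) < key P'"
        using sorted_idx[OF srt, of i "Suc i"] sorted_idx[OF srt, of "Suc i" j] ij by auto
      moreover have "L ! Suc i \<in> set L" using \<open>Suc i < j\<close> ij by simp
      ultimately show False using c by blast
    qed
    then show "Q P P'" using H ij by simp
  qed
next
  assume H: "\<forall>P\<in>set L. \<forall>P'\<in>set L. key P < key P' \<and> \<not> (\<exists>X\<in>set L. key P < key X \<and> key X < key P') \<longrightarrow> Q P P'"
  show "\<forall>i. Suc i < length L \<longrightarrow> Q (L ! i) (L ! Suc i)"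
  proof (intro allI impI)
    fix i assume i: "Suc i < length L"
    have "key (L ! i) < key (L ! Suc i)" using sorted_idx[OF srt, of i "Suc i"] i by simp
    moreover have "\<not> (\<exists>X\<in>set L. key (L ! i) < key X \<and> key X < key (L ! Suc i))"
    proof
      assume "\<exists>X\<in>set L. key (L ! i) < key X \<and> key X < key (L ! Suc i)"
      then obtain t where t: "t < length L" "key (L ! i) < key (L ! t)" "key (L ! t) < key (L ! Suc i)"
        by (auto simp: in_set_conv_nth)
      have "i < t" "t < Suc i" using sorted_idx[OF srt, of i t] sorted_idx[OF srt, of t "Suc i"] t i by auto
      then show False by simp
    qed
    ultimately show "Q (L ! i) (L ! Suc i)" using H i by simp
  qed
qed

context linorder begin
lemma skl_props:
  assumes "inj_on f A" "finite A"
  shows "set (sorted_key_list_of_set f A) = A \<and> sorted_wrt (<) (map f (sorted_key_list_of_set f A))"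
proof -
  interpret fik: folding_insort_key "(\<le>)" "(<)" A f by standard (rule assms(1))
  show ?thesis using fik.set_sorted_key_list_of_set[OF subset_refl assms(2)]
      fik.strict_sorted_key_list_of_set[OF subset_refl] by simp
qed
end

locale LL =
  fixes k n :: nat and I J :: "nat \<Rightarrow> nat"
  assumes VI: "inV k n I" and VJ: "inV k n J"
begin

definition x where "x a = I a + 1 - a"
definition y where "y a = J a + 1 - a"
definition lo where "lo a = min (x a) (y a)"
definition hi where "hi a = max (x a) (y a)"
definition S where "S = F k n I - F k n J \<union> (F k n J - F k n I)"
abbreviation RR where "RR \<equiv> (\<lambda>u v. u \<in> S \<and> v \<in> S \<and> adjacent u v)"
abbreviation cmp where "cmp \<equiv> component S"
abbreviation key :: "(nat \<times> nat) set \<Rightarrow> nat" where "key \<equiv> (\<lambda>P. Min (snd ` P))"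

lemma x_props: "1 \<le> a \<Longrightarrow> a \<le> k \<Longrightarrow> 1 \<le> x a \<and> x a + k \<le> n + 1 \<and> x a + a = I a + 1"
  using inV_bounds[OF VI, of a] unfolding x_def by auto
lemma y_props: "1 \<le> a \<Longrightarrow> a \<le> k \<Longrightarrow> 1 \<le> y a \<and> y a + k \<le> n + 1 \<and> y a + a = J a + 1"
  using inV_bounds[OF VJ, of a] unfolding y_def by auto

lemma x_mono: "1 \<le> a \<Longrightarrow> a \<le> a' \<Longrightarrow> a' \<le> k \<Longrightarrow> x a \<le> x a'"
  using smono_gap[of k I a a'] VI x_props[of a] x_props[of a'] by (auto simp: inV_def)
lemma y_mono: "1 \<le> a \<Longrightarrow> a \<le> a' \<Longrightarrow> a' \<le> k \<Longrightarrow> y a \<le> y a'"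
  using smono_gap[of k J a a'] VJ y_props[of a] y_props[of a'] by (auto simp: inV_def)
lemma lo_mono: "1 \<le> a \<Longrightarrow> a \<le> a' \<Longrightarrow> a' \<le> k \<Longrightarrow> lo a \<le> lo a'"
  using x_mono y_mono unfolding lo_def by fastforce
lemma hi_mono: "1 \<le> a \<Longrightarrow> a \<le> a' \<Longrightarrow> a' \<le> k \<Longrightarrow> hi a \<le> hi a'"
  using x_mono y_mono unfolding hi_def by fastforce

lemma xy_less: "1 \<le> a \<Longrightarrow> a \<le> k \<Longrightarrow> x a < y a \<longleftrightarrow> I a < J a"
  using x_props[of a] y_props[of a] by auto
lemma xy_eq: "1 \<le> a \<Longrightarrow> a \<le> k \<Longrightarrow> x a = y a \<longleftrightarrow> I a = J a"
  using x_props[of a] y_props[of a] by auto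

lemma FI_iff: "(a, b) \<in> F k n I \<longleftrightarrow> 1 \<le> a \<and> a \<le> k \<and> 1 \<le> b \<and> b + k \<le> n \<and> x a \<le> b"
proof -
  have "1 \<le> a \<Longrightarrow> a \<le> k \<Longrightarrow> 1 \<le> b \<Longrightarrow> (I a \<le> a + b - 1 \<longleftrightarrow> x a \<le> b)"
    using x_props[of a] by auto
  then show ?thesis unfolding F_def Pkn_def by auto
qed
lemma FJ_iff: "(a, b) \<in> F k n J \<longleftrightarrow> 1 \<le> a \<and> a \<le> k \<and> 1 \<le> b \<and> b + k \<le> n \<and> y a \<le> b"
proof -
  have "1 \<le> a \<Longrightarrow> a \<le> k \<Longrightarrow> 1 \<le> b \<Longrightarrow> (J a \<le> a + b - 1 \<longleftrightarrow> y a \<le> b)"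
    using y_props[of a] by auto
  then show ?thesis unfolding F_def Pkn_def by auto
qed

lemma lohi_bounds: "1 \<le> a \<Longrightarrow> a \<le> k \<Longrightarrow> 1 \<le> lo a \<and> hi a + k \<le> n + 1"
  using x_props[of a] y_props[of a] unfolding lo_def hi_def by auto

lemma S_mem: "(a, b) \<in> S \<longleftrightarrow> \<not> ((a, b) \<in> F k n I \<longleftrightarrow> (a, b) \<in> F k n J)"
  unfolding S_def by blast

lemma S_iff: "(a, b) \<in> S \<longleftrightarrow> 1 \<le> a \<and> a \<le> k \<and> lo a \<le> b \<and> b < hi a"
proof (cases "1 \<le> a \<and> a \<le> k")
  case True
  then have "1 \<le> lo a" "hi a + k \<le> n + 1" using lohi_bounds by auto
  then show ?thesis unfolding S_mem FI_iff FJ_iff using True unfolding lo_def hi_def by auto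
next
  case False then show ?thesis unfolding S_mem FI_iff FJ_iff by auto
qed

lemma S_FI: assumes "(a, b) \<in> S" shows "(a, b) \<in> F k n I \<longleftrightarrow> I a < J a"
proof -
  have h: "1 \<le> a" "a \<le> k" "lo a \<le> b" "b < hi a" using assms S_iff by auto
  have "1 \<le> b" "b + k \<le> n" using lohi_bounds[OF h(1,2)] h by auto
  then have "(a, b) \<in> F k n I \<longleftrightarrow> x a \<le> b" using FI_iff h by auto
  also have "\<dots> \<longleftrightarrow> x a < y a" using h unfolding lo_def hi_def by auto
  finally show ?thesis using xy_less h by auto
qed
lemma S_FJ: "(a, b) \<in> S \<Longrightarrow> (a, b) \<in> F k n J \<longleftrightarrow> \<not> I a < J a"
  using S_FI[of a b] S_mem[of a b] by auto

lemma D_iff: "1 \<le> a \<Longrightarrow> a \<le> k \<Longrightarrow> lo a < hi a \<longleftrightarrow> I a \<noteq> J a"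
  using xy_eq[of a] unfolding lo_def hi_def by auto

lemma S_bounds: "u \<in> S \<Longrightarrow> 1 \<le> fst u \<and> fst u \<le> k \<and> lo (fst u) \<le> snd u \<and> snd u < hi (fst u)"
  using S_iff[of "fst u" "snd u"] by simp

lemma vert_sign:
  assumes "(a, b) \<in> S" "(Suc a, b) \<in> S"
  shows "I a < J a \<longleftrightarrow> I (Suc a) < J (Suc a)"
proof -
  have a: "1 \<le> a" "Suc a \<le> k" using assms S_iff by auto
  have "x a \<le> x (Suc a)" "y a \<le> y (Suc a)" using x_mono y_mono a by auto
  then have "x a < y a \<longleftrightarrow> x (Suc a) < y (Suc a)"
    using assms unfolding S_iff lo_def hi_def by auto
  then show ?thesis using xy_less a by auto
qed

lemma RR_sign: assumes "RR u v" shows "I (fst u) < J (fst u) \<longleftrightarrow> I (fst v) < J (fst v)"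
proof -
  obtain a b a' b' where u: "u = (a, b)" and v: "v = (a', b')" by (cases u, cases v) auto
  have adj: "adjacent (a, b) (a', b')" "(a, b) \<in> S" "(a', b') \<in> S" using assms u v by auto
  then consider "a = a'" | "b = b'" "a = Suc a'" | "b = b'" "a' = Suc a" unfolding adjacent_def by auto
  then show ?thesis
  proof cases
    case 1 then show ?thesis using u v by simp
  next
    case 2 then show ?thesis using vert_sign[of a' b] adj u v by simp
  next
    case 3 then show ?thesis using vert_sign[of a b] adj u v by simp
  qed
qed

lemma rt_sign: "RR\<^sup>*\<^sup>* u v \<Longrightarrow> I (fst u) < J (fst u) \<longleftrightarrow> I (fst v) < J (fst v)"
proof (induction rule: rtranclp_induct)
  case base then show ?case by simp
next
  case (step v w) then show ?case using RR_sign[of v w] by blast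
qed

lemma adj_sym: "adjacent u v \<Longrightarrow> adjacent v u" unfolding adjacent_def by auto

lemma rt_sym: "RR\<^sup>*\<^sup>* u v \<Longrightarrow> RR\<^sup>*\<^sup>* v u"
proof (induction rule: rtranclp_induct)
  case base then show ?case by simp
next
  case (step v w)
  have "RR w v" using step(2) adj_sym by auto
  then show ?case using step(3) by (rule converse_rtranclp_into_rtranclp)
qed

lemma cmp_sub: "cmp u \<subseteq> S" unfolding component_def by auto
lemma cmp_self: "u \<in> S \<Longrightarrow> u \<in> cmp u" unfolding component_def by auto
lemma cmp_eq: assumes "RR\<^sup>*\<^sup>* u v" shows "cmp u = cmp v"
proof -
  have "RR\<^sup>*\<^sup>* v u" using rt_sym[OF assms] .
  then show ?thesis unfolding component_def using assms
    by (auto intro: rtranclp_trans[of RR u v] rtranclp_trans[of RR v u])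
qed
lemma cmp_mem: "w \<in> cmp u \<Longrightarrow> RR\<^sup>*\<^sup>* u w" unfolding component_def by auto
lemma cmp_of_mem: "w \<in> cmp u \<Longrightarrow> cmp w = cmp u"
  using cmp_eq[OF cmp_mem] by metis

lemma cmp_FI: assumes "u \<in> S" shows "cmp u \<subseteq> F k n I \<longleftrightarrow> I (fst u) < J (fst u)"
proof
  assume "cmp u \<subseteq> F k n I" then have "u \<in> F k n I" using cmp_self[OF assms] by blast
  then show "I (fst u) < J (fst u)" using S_FI[of "fst u" "snd u"] assms by simp
next
  assume h: "I (fst u) < J (fst u)"
  show "cmp u \<subseteq> F k n I"
  proof
    fix w assume w: "w \<in> cmp u"
    then have "w \<in> S" using cmp_sub[of u] by blast
    moreover have "I (fst w) < J (fst w)" using rt_sign[OF cmp_mem[OF w]] h by simp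
    ultimately show "w \<in> F k n I" using S_FI[of "fst w" "snd w"] by simp
  qed
qed
lemma cmp_FJ: assumes "u \<in> S" shows "cmp u \<subseteq> F k n J \<longleftrightarrow> \<not> I (fst u) < J (fst u)"
proof
  assume "cmp u \<subseteq> F k n J" then have "u \<in> F k n J" using cmp_self[OF assms] by blast
  then show "\<not> I (fst u) < J (fst u)" using S_FJ[of "fst u" "snd u"] assms by simp
next
  assume h: "\<not> I (fst u) < J (fst u)"
  show "cmp u \<subseteq> F k n J"
  proof
    fix w assume w: "w \<in> cmp u"
    then have "w \<in> S" using cmp_sub[of u] by blast
    moreover have "\<not> I (fst w) < J (fst w)" using rt_sign[OF cmp_mem[OF w]] h by simp
    ultimately show "w \<in> F k n J" using S_FJ[of "fst w" "snd w"] by simp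
  qed
qed


lemma horiz:
  assumes "1 \<le> a" "a \<le> k" "lo a \<le> b" "b \<le> b'" "b' < hi a"
  shows "RR\<^sup>*\<^sup>* (a, b) (a, b')"
  using assms(4,5)
proof (induction b' rule: dec_induct)
  case base then show ?case by simp
next
  case (step m)
  have R: "RR (a, m) (a, Suc m)" using step assms unfolding S_iff adjacent_def by auto
  have IH: "RR\<^sup>*\<^sup>* (a, b) (a, m)" using step by simp
  show ?case by (rule rtranclp.rtrancl_into_rtrancl[of RR, OF IH R])
qed

lemma conn:
  assumes "1 \<le> a" "a \<le> b" "b \<le> k" "lo a < hi a"
    and nb: "\<forall>l. a \<le> l \<and> l < b \<longrightarrow> lo (Suc l) < hi l"
  shows "RR\<^sup>*\<^sup>* (a, lo a) (b, lo b) \<and> lo b < hi b"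
  using assms(2,3)
proof (induction b rule: dec_induct)
  case base then show ?case using assms by simp
next
  case (step m)
  have m: "lo (Suc m) < hi m" using nb step by auto
  have lm: "lo m \<le> lo (Suc m)" "hi m \<le> hi (Suc m)" using lo_mono hi_mono assms step by auto
  have h1: "RR\<^sup>*\<^sup>* (m, lo m) (m, lo (Suc m))"
    using horiz[of m "lo m" "lo (Suc m)"] assms(1) step(1,2,4) m lm by simp
  have h2: "RR (m, lo (Suc m)) (Suc m, lo (Suc m))"
    using assms step m lm unfolding S_iff adjacent_def by auto
  have h0: "RR\<^sup>*\<^sup>* (a, lo a) (m, lo m)" using step(3,4) by simp
  have "RR\<^sup>*\<^sup>* (a, lo a) (Suc m, lo (Suc m))"
    using rtranclp_trans[of RR, OF h0 rtranclp.rtrancl_into_rtrancl[of RR, OF h1 h2]] .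
  moreover have "lo (Suc m) < hi (Suc m)" using m lm by simp
  ultimately show ?case by blast
qed

lemma nocross:
  assumes "RR\<^sup>*\<^sup>* u v" "hi l \<le> lo (Suc l)"
  shows "fst u \<le> l \<longleftrightarrow> fst v \<le> l"
  using assms(1)
proof (induction rule: rtranclp_induct)
  case base then show ?case by simp
next
  case (step v w)
  have vS: "v \<in> S" "w \<in> S" using step(2) by simp_all
  have v: "1 \<le> fst v" "fst v \<le> k" "lo (fst v) \<le> snd v" "snd v < hi (fst v)" using S_bounds[OF vS(1)] by simp_all
  have w: "1 \<le> fst w" "fst w \<le> k" "lo (fst w) \<le> snd w" "snd w < hi (fst w)" using S_bounds[OF vS(2)] by simp_all
  have "fst v \<le> l \<longleftrightarrow> fst w \<le> l"
  proof (rule ccontr)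
    assume c: "\<not> (fst v \<le> l \<longleftrightarrow> fst w \<le> l)"
    have adj: "adjacent v w" using step(2) by simp
    have ne: "fst v \<noteq> fst w" using c by auto
    have a2: "snd v = snd w \<and> (fst v = fst w + 1 \<or> fst w = fst v + 1)"
      using adj ne unfolding adjacent_def by blast
    then have ad: "snd v = snd w" "fst v = Suc l \<and> fst w = l \<or> fst w = Suc l \<and> fst v = l"
      using c by linarith+
    show False using ad(2)
    proof
      assume h: "fst v = Suc l \<and> fst w = l"
      have "snd w < hi l" using w h by simp
      moreover have "lo (Suc l) \<le> snd v" using v h by simp
      ultimately show False using ad(1) assms(2) by simp
    next
      assume h: "fst w = Suc l \<and> fst v = l"
      have "snd v < hi l" using v h by simp
      moreover have "lo (Suc l) \<le> snd w" using w h by simp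
      ultimately show False using ad(1) assms(2) by simp
    qed
  qed
  then show ?case using step(3) by blast
qed

lemma rowcomp: assumes "u \<in> S" shows "cmp u = cmp (fst u, lo (fst u))"
proof -
  have "RR\<^sup>*\<^sup>* (fst u, lo (fst u)) (fst u, snd u)"
    using S_bounds[OF assms] by (intro horiz) auto
  then have "cmp (fst u, lo (fst u)) = cmp (fst u, snd u)" by (rule cmp_eq)
  then show ?thesis by simp
qed

lemma same_row: assumes "u \<in> S" "v \<in> S" "fst u = fst v" shows "cmp u = cmp v"
proof -
  have "cmp u = cmp (fst u, lo (fst u))" by (rule rowcomp[OF assms(1)])
  also have "\<dots> = cmp v" using rowcomp[OF assms(2)] assms(3) by simp
  finally show ?thesis .
qed

lemma sep:
  assumes "u \<in> S" "v \<in> S" "fst u < fst v" "cmp u \<noteq> cmp v"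
  shows "\<exists>l. fst u \<le> l \<and> l < fst v \<and> hi l \<le> lo (Suc l)"
proof (rule ccontr)
  assume "\<not> ?thesis"
  then have nb: "\<forall>l. fst u \<le> l \<and> l < fst v \<longrightarrow> lo (Suc l) < hi l" by auto
  have "lo (fst u) < hi (fst u)" "1 \<le> fst u" "fst v \<le> k" using S_bounds assms by fastforce+
  then have "RR\<^sup>*\<^sup>* (fst u, lo (fst u)) (fst v, lo (fst v))"
    using conn[of "fst u" "fst v"] nb assms(3) by auto
  then have "cmp (fst u, lo (fst u)) = cmp (fst v, lo (fst v))" by (rule cmp_eq)
  then show False using rowcomp[OF assms(1)] rowcomp[OF assms(2)] assms(4) by simp
qed

lemma before:
  assumes "u \<in> S" "v \<in> S" "fst u < fst v" "cmp u \<noteq> cmp v"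
    and "w \<in> cmp u" "w' \<in> cmp v"
  shows "snd w < snd w'"
proof -
  obtain l where l: "fst u \<le> l" "l < fst v" "hi l \<le> lo (Suc l)" using sep[OF assms(1-4)] by blast
  have "fst w \<le> l" using nocross[OF cmp_mem[OF assms(5)] l(3)] l by simp
  have "\<not> fst w' \<le> l" using nocross[OF cmp_mem[OF assms(6)] l(3)] l by simp
  have ws: "w \<in> S" "w' \<in> S" using assms(5,6) cmp_sub[of u] cmp_sub[of v] by blast+
  have "snd w < hi (fst w)" using S_bounds[OF ws(1)] by simp
  also have "\<dots> \<le> hi l" using hi_mono S_bounds[OF ws(1)] \<open>fst w \<le> l\<close> l S_bounds[OF assms(2)] by simp
  also have "\<dots> \<le> lo (Suc l)" by fact
  also have "\<dots> \<le> lo (fst w')" using lo_mono \<open>\<not> fst w' \<le> l\<close> S_bounds[OF ws(2)] by simp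
  also have "\<dots> \<le> snd w'" using S_bounds[OF ws(2)] by simp
  finally show ?thesis .
qed

lemma finite_S: "finite S"
proof -
  have "S \<subseteq> Pkn k n" unfolding S_def F_def by auto
  moreover have "finite (Pkn k n)" unfolding Pkn_def by simp
  ultimately show ?thesis by (rule finite_subset)
qed

lemma finite_cmp: "finite (cmp u)" using finite_subset[OF cmp_sub finite_S] .

lemma key_mem: assumes "u \<in> S" shows "key (cmp u) \<in> snd ` cmp u \<and> (\<forall>w\<in>cmp u. key (cmp u) \<le> snd w)"
  using finite_cmp[of u] cmp_self[OF assms] by (auto intro!: Min_in)

lemma key_less:
  assumes "u \<in> S" "v \<in> S" "fst u < fst v" "cmp u \<noteq> cmp v"
  shows "key (cmp u) < key (cmp v)"
proof -
  obtain w where w: "w \<in> cmp u" "key (cmp u) = snd w" using key_mem[OF assms(1)] by force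
  obtain w' where w': "w' \<in> cmp v" "key (cmp v) = snd w'" using key_mem[OF assms(2)] by force
  show ?thesis using before[OF assms w(1) w'(1)] w w' by simp
qed

lemma key_le:
  assumes "u \<in> S" "v \<in> S" "fst u \<le> fst v"
  shows "key (cmp u) \<le> key (cmp v)"
  using key_less[OF assms(1,2)] same_row[OF assms(1,2)] assms(3)
  by (metis le_neq_implies_less less_imp_le order_refl)

lemma inj_key: "inj_on key (cmp ` S)"
proof (rule inj_onI)
  fix P Q assume "P \<in> cmp ` S" "Q \<in> cmp ` S" and e: "key P = key Q"
  then obtain u v where uv: "u \<in> S" "v \<in> S" "P = cmp u" "Q = cmp v" by auto
  show "P = Q"
  proof (rule ccontr)
    assume ne: "P \<noteq> Q"
    have "fst u < fst v \<or> fst v < fst u" using same_row[OF uv(1,2)] ne uv by fastforce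
    then show False
    proof
      assume "fst u < fst v" then show False using key_less[OF uv(1,2)] ne uv e by simp
    next
      assume "fst v < fst u" then show False using key_less[OF uv(2,1)] ne uv e by simp
    qed
  qed
qed


lemma list_props:
  "set (sorted_key_list_of_set key (cmp ` S)) = cmp ` S \<and>
   sorted_wrt (<) (map key (sorted_key_list_of_set key (cmp ` S)))"
  using skl_props[OF inj_key] finite_S by simp

lemma D_cell: "1 \<le> a \<Longrightarrow> a \<le> k \<Longrightarrow> I a \<noteq> J a \<Longrightarrow> (a, lo a) \<in> S"
  using D_iff[of a] S_iff[of a "lo a"] by simp

lemma S_D: "u \<in> S \<Longrightarrow> I (fst u) \<noteq> J (fst u)"
  using S_bounds[of u] D_iff[of "fst u"] by simp

lemma nest_iff:
  assumes "1 \<le> a" "a < b" "b \<le> k"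
  shows "arcs_nest (I a) (I b) (J a) (J b) \<longleftrightarrow> (I a < J a \<and> J b < I b) \<or> (J a < I a \<and> I b < J b)"
  using smono_less[OF VI assms] smono_less[OF VJ assms] unfolding arcs_nest_def by auto

lemma nonnest_rows:
  "nonnesting k I J \<longleftrightarrow> (\<forall>a b. 1 \<le> a \<and> a \<le> k \<and> 1 \<le> b \<and> b \<le> k \<and> I a \<noteq> J a \<and> I b \<noteq> J b
       \<longrightarrow> (I a < J a \<longleftrightarrow> I b < J b))"
proof
  assume N: "nonnesting k I J"
  show "\<forall>a b. 1 \<le> a \<and> a \<le> k \<and> 1 \<le> b \<and> b \<le> k \<and> I a \<noteq> J a \<and> I b \<noteq> J b \<longrightarrow> (I a < J a \<longleftrightarrow> I b < J b)"
  proof (intro allI impI)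
    fix a b assume h: "1 \<le> a \<and> a \<le> k \<and> 1 \<le> b \<and> b \<le> k \<and> I a \<noteq> J a \<and> I b \<noteq> J b"
    consider "a < b" | "a = b" | "b < a" by linarith
    then show "I a < J a \<longleftrightarrow> I b < J b"
    proof cases
      case 1 then show ?thesis using N nest_iff[of a b] h unfolding nonnesting_def by auto
    next
      case 2 then show ?thesis by simp
    next
      case 3 then show ?thesis using N nest_iff[of b a] h unfolding nonnesting_def by auto
    qed
  qed
next
  assume H: "\<forall>a b. 1 \<le> a \<and> a \<le> k \<and> 1 \<le> b \<and> b \<le> k \<and> I a \<noteq> J a \<and> I b \<noteq> J b \<longrightarrow> (I a < J a \<longleftrightarrow> I b < J b)"
  show "nonnesting k I J" unfolding nonnesting_def
  proof (intro allI impI)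
    fix a b assume h: "1 \<le> a" "a < b" "b \<le> k"
    show "\<not> arcs_nest (I a) (I b) (J a) (J b)"
    proof
      assume "arcs_nest (I a) (I b) (J a) (J b)"
      then have "(I a < J a \<and> J b < I b) \<or> (J a < I a \<and> I b < J b)" using nest_iff[OF h] by simp
      moreover have "I a \<noteq> J a \<and> I b \<noteq> J b \<longrightarrow> (I a < J a \<longleftrightarrow> I b < J b)" using H h by simp
      ultimately show False by auto
    qed
  qed
qed

lemma nonnest_comps:
  "nonnesting k I J \<longleftrightarrow> (\<forall>P\<in>cmp ` S. \<forall>Q\<in>cmp ` S. (P \<subseteq> F k n I) = (Q \<subseteq> F k n I))"
  unfolding nonnest_rows
proof
  assume H: "\<forall>a b. 1 \<le> a \<and> a \<le> k \<and> 1 \<le> b \<and> b \<le> k \<and> I a \<noteq> J a \<and> I b \<noteq> J b \<longrightarrow> (I a < J a \<longleftrightarrow> I b < J b)"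
  show "\<forall>P\<in>cmp ` S. \<forall>Q\<in>cmp ` S. (P \<subseteq> F k n I) = (Q \<subseteq> F k n I)"
  proof (intro ballI)
    fix P Q assume "P \<in> cmp ` S" "Q \<in> cmp ` S"
    then obtain u v where uv: "u \<in> S" "v \<in> S" "P = cmp u" "Q = cmp v" by auto
    have "I (fst u) < J (fst u) \<longleftrightarrow> I (fst v) < J (fst v)"
      using H S_bounds[OF uv(1)] S_bounds[OF uv(2)] S_D[OF uv(1)] S_D[OF uv(2)] by blast
    then show "(P \<subseteq> F k n I) = (Q \<subseteq> F k n I)" using cmp_FI[OF uv(1)] cmp_FI[OF uv(2)] uv by simp
  qed
next
  assume H: "\<forall>P\<in>cmp ` S. \<forall>Q\<in>cmp ` S. (P \<subseteq> F k n I) = (Q \<subseteq> F k n I)"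
  show "\<forall>a b. 1 \<le> a \<and> a \<le> k \<and> 1 \<le> b \<and> b \<le> k \<and> I a \<noteq> J a \<and> I b \<noteq> J b \<longrightarrow> (I a < J a \<longleftrightarrow> I b < J b)"
  proof (intro allI impI)
    fix a b assume h: "1 \<le> a \<and> a \<le> k \<and> 1 \<le> b \<and> b \<le> k \<and> I a \<noteq> J a \<and> I b \<noteq> J b"
    have u: "(a, lo a) \<in> S" "(b, lo b) \<in> S" using D_cell h by auto
    have "(cmp (a, lo a) \<subseteq> F k n I) = (cmp (b, lo b) \<subseteq> F k n I)" using H u by blast
    then show "I a < J a \<longleftrightarrow> I b < J b" using cmp_FI[OF u(1)] cmp_FI[OF u(2)] by simp
  qed
qed

lemma cross_rows:
  assumes "1 \<le> a" "a < b" "b \<le> k" "\<forall>l. a < l \<and> l < b \<longrightarrow> I l = J l"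
    and "arcs_cross (I a) (I b) (J a) (J b)"
  shows "I a \<noteq> J a \<and> I b \<noteq> J b \<and> (I a < J a \<longleftrightarrow> I b < J b) \<and> hi a \<le> lo (Suc a)"
proof -
  have s1: "Suc a \<le> k" using assms by simp
  have xa: "1 \<le> x a \<and> x a + a = I a + 1" "1 \<le> y a \<and> y a + a = J a + 1" using x_props y_props assms by auto
  have xs: "x (Suc a) + Suc a = I (Suc a) + 1" "y (Suc a) + Suc a = J (Suc a) + 1"
    using x_props[of "Suc a"] y_props[of "Suc a"] s1 by auto
  have mono: "x a \<le> x (Suc a)" "y a \<le> y (Suc a)" using x_mono y_mono assms s1 by auto
  from assms(5) consider "I a < J a" "J a < I b" "I b < J b" | "J a < I a" "I a < J b" "J b < I b"
    unfolding arcs_cross_def by auto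
  then show ?thesis
  proof cases
    case 1
    have "hi a \<le> lo (Suc a)"
    proof (cases "b = Suc a")
      case True
      then show ?thesis using 1 xa xs unfolding hi_def lo_def by auto
    next
      case False
      then have "I (Suc a) = J (Suc a)" using assms(2,4) by auto
      then show ?thesis using 1 xa xs mono unfolding hi_def lo_def by auto
    qed
    then show ?thesis using 1 by auto
  next
    case 2
    have "hi a \<le> lo (Suc a)"
    proof (cases "b = Suc a")
      case True
      then show ?thesis using 2 xa xs unfolding hi_def lo_def by auto
    next
      case False
      then have "I (Suc a) = J (Suc a)" using assms(2,4) by auto
      then show ?thesis using 2 xa xs mono unfolding hi_def lo_def by auto
    qed
    then show ?thesis using 2 by auto
  qed
qed

lemma rows_cross:
  assumes "1 \<le> a" "a < b" "b \<le> k" "I a \<noteq> J a" "I b \<noteq> J b" "I a < J a \<longleftrightarrow> I b < J b"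
    and "hi a \<le> lo b"
  shows "arcs_cross (I a) (I b) (J a) (J b)"
proof -
  have xa: "x a + a = I a + 1" "y a + a = J a + 1" "x b + b = I b + 1" "y b + b = J b + 1"
    using x_props[of a] y_props[of a] x_props[of b] y_props[of b] assms by auto
  show ?thesis
  proof (cases "I a < J a")
    case True
    then have "I b < J b" using assms by simp
    then show ?thesis using True assms xa unfolding hi_def lo_def arcs_cross_def by auto
  next
    case False
    then have "J a < I a" "J b < I b" using assms by auto
    then show ?thesis using assms xa unfolding hi_def lo_def arcs_cross_def by auto
  qed
qed


lemma noncross_comps:
  "noncrossing k I J \<longleftrightarrow>
   (\<forall>P\<in>cmp ` S. \<forall>P'\<in>cmp ` S. key P < key P' \<and> \<not> (\<exists>X\<in>cmp ` S. key P < key X \<and> key X < key P')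
      \<longrightarrow> (P \<subseteq> F k n I) \<noteq> (P' \<subseteq> F k n I))"
proof
  assume NC: "noncrossing k I J"
  show "\<forall>P\<in>cmp ` S. \<forall>P'\<in>cmp ` S. key P < key P' \<and> \<not> (\<exists>X\<in>cmp ` S. key P < key X \<and> key X < key P')
      \<longrightarrow> (P \<subseteq> F k n I) \<noteq> (P' \<subseteq> F k n I)"
  proof (intro ballI impI notI)
    fix P P' assume PP: "P \<in> cmp ` S" "P' \<in> cmp ` S"
      and c: "key P < key P' \<and> \<not> (\<exists>X\<in>cmp ` S. key P < key X \<and> key X < key P')"
      and same: "(P \<subseteq> F k n I) = (P' \<subseteq> F k n I)"
    obtain u v where uv: "u \<in> S" "v \<in> S" "P = cmp u" "P' = cmp v" using PP by auto
    have finP: "finite (fst ` P)" "fst ` P \<noteq> {}" using finite_cmp[of u] uv(3) cmp_self[OF uv(1)] by auto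
    have finP': "finite (fst ` P')" "fst ` P' \<noteq> {}" using finite_cmp[of v] uv(4) cmp_self[OF uv(2)] by auto
    define a where "a = Max (fst ` P)"
    define b where "b = Min (fst ` P')"
    obtain ua where ua: "ua \<in> P" "fst ua = a" using Max_in[OF finP] a_def by auto
    obtain vb where vb: "vb \<in> P'" "fst vb = b" using Min_in[OF finP'] b_def by auto
    have uaS: "ua \<in> S" using ua uv cmp_sub[of u] by blast
    have vbS: "vb \<in> S" using vb uv cmp_sub[of v] by blast
    have Pa: "P = cmp ua" using cmp_of_mem[of ua u] ua uv by simp
    have Pb: "P' = cmp vb" using cmp_of_mem[of vb v] vb uv by simp
    have amax: "\<And>w. w \<in> P \<Longrightarrow> fst w \<le> a" using finP a_def by simp
    have bmin: "\<And>w. w \<in> P' \<Longrightarrow> b \<le> fst w" using finP' b_def by simp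
    have ab: "a < b"
    proof (rule ccontr)
      assume "\<not> a < b"
      then have "key P' \<le> key P" using key_le[OF vbS uaS] ua vb Pa Pb by simp
      then show False using c by simp
    qed
    have ne: "cmp ua \<noteq> cmp vb" using c Pa Pb by auto
    obtain l where l: "a \<le> l" "l < b" "hi l \<le> lo (Suc l)" using sep[OF uaS vbS] ab ua vb ne by auto
    have a1: "1 \<le> a" using S_bounds[OF uaS] ua by simp
    have bk: "b \<le> k" using S_bounds[OF vbS] vb by simp
    have "hi a \<le> hi l" using hi_mono a1 l bk by simp
    also have "\<dots> \<le> lo (Suc l)" by fact
    also have "\<dots> \<le> lo b" using lo_mono l bk by simp
    finally have hl: "hi a \<le> lo b" .
    have Da: "I a \<noteq> J a" using S_D[OF uaS] ua by simp
    have Db: "I b \<noteq> J b" using S_D[OF vbS] vb by simp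
    have sg: "I a < J a \<longleftrightarrow> I b < J b"
      using same cmp_FI[OF uaS] cmp_FI[OF vbS] Pa Pb ua vb by simp
    have mid: "\<forall>l. a < l \<and> l < b \<longrightarrow> I l = J l"
    proof (intro allI impI)
      fix c assume cc: "a < c \<and> c < b"
      show "I c = J c"
      proof (rule ccontr)
        assume "I c \<noteq> J c"
        then have wS: "(c, lo c) \<in> S" using D_cell a1 bk cc by simp
        have n1: "cmp ua \<noteq> cmp (c, lo c)"
        proof
          assume "cmp ua = cmp (c, lo c)"
          then have "(c, lo c) \<in> P" using Pa cmp_self[OF wS] by simp
          then show False using amax cc by fastforce
        qed
        have n2: "cmp (c, lo c) \<noteq> cmp vb"
        proof
          assume "cmp (c, lo c) = cmp vb"
          then have "(c, lo c) \<in> P'" using Pb cmp_self[OF wS] by simp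
          then show False using bmin cc by fastforce
        qed
        have "key P < key (cmp (c, lo c))" using key_less[OF uaS wS] ua cc n1 Pa by simp
        moreover have "key (cmp (c, lo c)) < key P'" using key_less[OF wS vbS] vb cc n2 Pb by simp
        moreover have "cmp (c, lo c) \<in> cmp ` S" using wS by simp
        ultimately show False using c by blast
      qed
    qed
    have "arcs_cross (I a) (I b) (J a) (J b)" using rows_cross[OF a1 ab bk Da Db sg hl] .
    moreover have "\<not> arcs_cross (I a) (I b) (J a) (J b)" using NC a1 ab bk mid unfolding noncrossing_def by blast
    ultimately show False by simp
  qed
next
  assume H: "\<forall>P\<in>cmp ` S. \<forall>P'\<in>cmp ` S. key P < key P' \<and> \<not> (\<exists>X\<in>cmp ` S. key P < key X \<and> key X < key P')
      \<longrightarrow> (P \<subseteq> F k n I) \<noteq> (P' \<subseteq> F k n I)"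
  show "noncrossing k I J" unfolding noncrossing_def
  proof (intro allI impI notI)
    fix a b assume a1: "1 \<le> a" and ab: "a < b" and bk: "b \<le> k"
      and mid: "\<forall>l. a < l \<longrightarrow> l < b \<longrightarrow> I l = J l"
      and cr: "arcs_cross (I a) (I b) (J a) (J b)"
    have mid': "\<forall>l. a < l \<and> l < b \<longrightarrow> I l = J l" using mid by blast
    have R: "I a \<noteq> J a \<and> I b \<noteq> J b \<and> (I a < J a \<longleftrightarrow> I b < J b) \<and> hi a \<le> lo (Suc a)"
      using cross_rows[OF a1 ab bk mid' cr] .
    have uS: "(a, lo a) \<in> S" using D_cell a1 ab bk R by simp
    have vS: "(b, lo b) \<in> S" using D_cell a1 ab bk R by simp
    have ne: "cmp (a, lo a) \<noteq> cmp (b, lo b)"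
    proof
      assume "cmp (a, lo a) = cmp (b, lo b)"
      then have "(b, lo b) \<in> cmp (a, lo a)" using cmp_self[OF vS] by simp
      then have rr: "RR\<^sup>*\<^sup>* (a, lo a) (b, lo b)" by (rule cmp_mem)
      have "a \<le> a \<longleftrightarrow> b \<le> a" using nocross[OF rr, of a] R by simp
      then show False using ab by simp
    qed
    have kl: "key (cmp (a, lo a)) < key (cmp (b, lo b))" using key_less[OF uS vS] ab ne by simp
    have nb: "\<not> (\<exists>X\<in>cmp ` S. key (cmp (a, lo a)) < key X \<and> key X < key (cmp (b, lo b)))"
    proof
      assume "\<exists>X\<in>cmp ` S. key (cmp (a, lo a)) < key X \<and> key X < key (cmp (b, lo b))"
      then obtain w where w: "w \<in> S" "key (cmp (a, lo a)) < key (cmp w)" "key (cmp w) < key (cmp (b, lo b))"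
        by auto
      consider "fst w \<le> a" | "b \<le> fst w" | "a < fst w" "fst w < b" by linarith
      then show False
      proof cases
        case 1 then show False using key_le[OF w(1) uS] w by simp
      next
        case 2 then show False using key_le[OF vS w(1)] w by simp
      next
        case 3 then show False using mid' S_D[OF w(1)] by blast
      qed
    qed
    have "(cmp (a, lo a) \<subseteq> F k n I) \<noteq> (cmp (b, lo b) \<subseteq> F k n I)"
      using H uS vS kl nb by blast
    then show False using cmp_FI[OF uS] cmp_FI[OF vS] R by simp
  qed
qed

end

theorem lemma4p11:
  fixes k n :: nat and I J :: "nat \<Rightarrow> nat"
  assumes "1 \<le> k" and "k \<le> n - 1"
    and "inV k n I" and "inV k n J"
  defines "d \<equiv> length (comp_list k n I J)"
  shows "(nonnesting k I J \<longleftrightarrow>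
            {alpha k n I I J, alpha k n J I J} = {replicate d 0, replicate d 1})
       \<and> (noncrossing k I J \<longleftrightarrow>
            {alpha k n I I J, alpha k n J I J} = {alt01 d, alt10 d})"
proof -
  interpret LL k n I J using assms(3,4) by unfold_locales
  define L where "L = comp_list k n I J"
  have Leq: "L = sorted_key_list_of_set key (cmp ` S)"
    unfolding L_def comp_list_def components_def S_def by simp
  have setL: "set L = cmp ` S" and srt: "sorted_wrt (<) (map key L)"
    using list_props Leq by auto
  let ?p = "\<lambda>P. P \<subseteq> F k n I"
  have aI: "alpha k n I I J = map (\<lambda>z. if ?p z then 1 else 0) L" unfolding alpha_def L_def by simp
  have aJ: "alpha k n J I J = map (\<lambda>z. if ?p z then 0 else 1) L"
  proof -
    have "alpha k n J I J = map (\<lambda>P. if P \<subseteq> F k n J then 1 else 0) L" unfolding alpha_def L_def by simp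
    also have "\<dots> = map (\<lambda>z. if ?p z then 0 else 1) L"
    proof (rule map_cong[OF refl])
      fix P assume "P \<in> set L"
      then obtain u where "u \<in> S" "P = cmp u" using setL by auto
      then show "(if P \<subseteq> F k n J then 1 else 0) = (if ?p P then 0 else 1)"
        using cmp_FI cmp_FJ by simp
    qed
    finally show ?thesis .
  qed
  have dL: "d = length L" unfolding d_def L_def by simp
  have part1: "nonnesting k I J \<longleftrightarrow>
            {alpha k n I I J, alpha k n J I J} = {replicate d 0, replicate d 1}"
    unfolding aI aJ dL G_const nonnest_comps setL by blast
  have part2: "noncrossing k I J \<longleftrightarrow>
            {alpha k n I I J, alpha k n J I J} = {alt01 d, alt10 d}"
    unfolding aI aJ dL G_alt noncross_comps G_cons[OF srt, symmetric] setL[symmetric] by blast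
  show ?thesis using part1 part2 by blast
qed

end
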